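(* Let $\{\mathbf Z_i(n), i\in\mathbb N\}$ be a critical GWBP/$\infty$ with mean matrix $\mathbf M\in\mathcal M_1^0$ and $\mathbf F(\mathbf s)\neq\mathbf M\mathbf s$. For each $i$ define $\epsilon_{1,i}(\mathbf Q(n;\mathbf s))$ by $$\sum_{j\in\mathbb N}Q_j(n;\mathbf s)\,N_{ij}\big(\mathbf F(n;\mathbf s)\big)=M_i\,\epsilon_{1,i}(\mathbf Q(n;\mathbf s)).$$ Then $$\lim_{n\to\infty}\sup_{\mathbf s\in\mathbf S,\ i\in\mathbb N}\frac{|\epsilon_{1,i}(\mathbf Q(n;\mathbf s))|}{\mathcal Q(n;\mathbf s)}=0.$$
   Context: A GWBP/$\infty$ has types $\mathbb N=\{1,2,\dots\}$. Each particle lives one unit of time; a type-$i$ particle produces, independently of everything else, a random vector $\mathbf Z_i=(Z_{ij})_{j\in\mathbb N}$ of children, with $Z_i:=\sum_jZ_{ij}<\infty$ a.s. $\mathbf Z_i(n)=(Z_{ij}(n))_j$ is the generation-$n$ population from one type-$i$ particle. For $\mathbf s\in[0,1]^{\mathbb N}$: $F_i(n;\mathbf s)=\mathbb E\prod_js_j^{Z_{ij}(n)}$, $F_i(\mathbf s)=F_i(1;\mathbf s)$, $\mathbf F(n;\mathbf s)=(F_i(n;\mathbf s))_i$, $Q_i(n;\mathbf s)=1-F_i(n;\mathbf s)$, $\mathbf Q(n;\mathbf s)=(Q_i(n;\mathbf s))_i$, $\mathcal Q(n;\mathbf s)=\sup_iQ_i(n;\mathbf s)$, $N_{ij}(\mathbf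 s)=\mathbb E\big[\sum_{k=0}^{Z_{ij}-1}s_j^k\big(1-\prod_{l=j+1}^\infty s_l^{Z_{il}}\big)\big]$. $\mathbf S=\{\mathbf s\in[0,1]^{\mathbb N}:\mathbf s\neq\mathbf 1\}$. "$\mathbf F(\mathbf s)\neq\mathbf M\mathbf s$" means it is not true that $F_i(\mathbf s)=\sum_jM_{ij}s_j$ for all $i,\mathbf s$. Mean matrix $\mathbf M=(M_{ij})$, $M_{ij}=\mathbb EZ_{ij}$, $M^{(n)}_{ij}=\mathbb EZ_{ij}(n)$, $M_i=\sum_jM_{ij}=\mathbb EZ_i$. Irreducible: for all $i,j$ some $M^{(n)}_{ij}>0$; aperiodic: gcd of such $n$ is 1; then $\lim_n(M^{(n)}_{ij})^{1/n}=1/R$ for a common $R$; critical: $R=1$. $\mathbf M\in\mathcal M_1$ means: (i) irreducible, aperiodic, $R=1$, 1-recurrent ($\sum_nM^{(n)}_{ij}=\infty$) and 1-positive ($\lim_nM^{(n)}_{ij}>0$ for all $i,j$); then there are positive eigenvectors $\mathbf v\mathbf M=\mathbf v$, $\mathbf M\mathbf u^T=\mathbf u^T$, unique up to positive multiples, normalized with $\sum_jv_ju_j=1$; (ii) $\sum_jv_j=1$ and $U:=\sup_iu_i<\infty$; (iii) $\lim_{N\to\infty}\sup_iM_i^{-1}\sum_{j>N}M_{ij}=0$ and $\lim_{K\to\infty}\sup_iM_i^{-1}\mathbb E[Z_i;Z_i>K]=0$. $\mathbf M\in\mathcal M_1^0$: $\mathbf M\in\mathcal M_1$ and (iv) there exist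 $m\in\mathbb N$, $c,C>0$ with $M_{ij}<Cu_iv_j$ and $M^{(m)}_{1j}>cv_j$ for all $i,j$. *)

theory Defs
  imports "HOL-Probability.Probability"
begin

text \<open>Types are labelled by nat (type 0 plays the role of the paper's type 1).
  An offspring law for type i is a pmf on offspring vectors z :: nat \<Rightarrow> nat.\<close>

definition supp :: "(nat \<Rightarrow> nat) \<Rightarrow> nat set" where
  "supp z = {j. z j \<noteq> 0}"

definition Ztot :: "(nat \<Rightarrow> nat) \<Rightarrow> nat" where
  "Ztot z = (\<Sum>j\<in>supp z. z j)"

definition valid_offspring :: "(nat \<Rightarrow> (nat \<Rightarrow> nat) pmf) \<Rightarrow> bool" where
  "valid_offspring P \<longleftrightarrow> (\<forall>i. \<forall>z\<in>set_pmf (P i). finite (supp z))"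

definition genf :: "(nat \<Rightarrow> (nat \<Rightarrow> nat) pmf) \<Rightarrow> nat \<Rightarrow> (nat \<Rightarrow> real) \<Rightarrow> real" where
  "genf P i s = measure_pmf.expectation (P i) (\<lambda>z. \<Prod>j\<in>supp z. s j ^ z j)"

fun genfn :: "(nat \<Rightarrow> (nat \<Rightarrow> nat) pmf) \<Rightarrow> nat \<Rightarrow> (nat \<Rightarrow> real) \<Rightarrow> nat \<Rightarrow> real" where
  "genfn P 0 s = s"
| "genfn P (Suc n) s = (\<lambda>i. genf P i (genfn P n s))"

definition Qn :: "(nat \<Rightarrow> (nat \<Rightarrow> nat) pmf) \<Rightarrow> nat \<Rightarrow> (nat \<Rightarrow> real) \<Rightarrow> nat \<Rightarrow> real" where
  "Qn P n s i = 1 - genfn P n s i"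

definition Qsup :: "(nat \<Rightarrow> (nat \<Rightarrow> nat) pmf) \<Rightarrow> nat \<Rightarrow> (nat \<Rightarrow> real) \<Rightarrow> real" where
  "Qsup P n s = (SUP i. Qn P n s i)"

definition Mmat :: "(nat \<Rightarrow> (nat \<Rightarrow> nat) pmf) \<Rightarrow> nat \<Rightarrow> nat \<Rightarrow> ennreal" where
  "Mmat P i j = (\<integral>\<^sup>+ z. ennreal (real (z j)) \<partial>measure_pmf (P i))"

definition Mtot :: "(nat \<Rightarrow> (nat \<Rightarrow> nat) pmf) \<Rightarrow> nat \<Rightarrow> ennreal" where
  "Mtot P i = (\<integral>\<^sup>+ z. ennreal (real (Ztot z)) \<partial>measure_pmf (P i))"

fun Mpow :: "(nat \<Rightarrow> (nat \<Rightarrow> nat) pmf) \<Rightarrow> nat \<Rightarrow> nat \<Rightarrow> nat \<Rightarrow> ennreal" where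
  "Mpow P 0 i j = (if i = j then 1 else 0)"
| "Mpow P (Suc n) i j = (\<Sum>k. Mpow P n i k * Mmat P k j)"

definition Nfun :: "(nat \<Rightarrow> (nat \<Rightarrow> nat) pmf) \<Rightarrow> nat \<Rightarrow> nat \<Rightarrow> (nat \<Rightarrow> real) \<Rightarrow> real" where
  "Nfun P i j s = measure_pmf.expectation (P i)
     (\<lambda>z. (\<Sum>k<z j. s j ^ k) * (1 - (\<Prod>l\<in>{l\<in>supp z. j < l}. s l ^ z l)))"

definition eps1 :: "(nat \<Rightarrow> (nat \<Rightarrow> nat) pmf) \<Rightarrow> nat \<Rightarrow> (nat \<Rightarrow> real) \<Rightarrow> nat \<Rightarrow> real" where
  "eps1 P n s i = (\<Sum>j. Qn P n s j * Nfun P i j (genfn P n s)) / enn2real (Mtot P i)"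

definition in_M10 :: "(nat \<Rightarrow> (nat \<Rightarrow> nat) pmf) \<Rightarrow> bool" where
  "in_M10 P \<longleftrightarrow>
     \<comment> \<open>(i) irreducible, aperiodic, R = 1, 1-recurrent, 1-positive\<close>
     (\<forall>i j. \<exists>n\<ge>1. 0 < Mpow P n i j) \<and>
     (\<forall>i. Gcd {n. 1 \<le> n \<and> 0 < Mpow P n i i} = 1) \<and>
     (\<forall>i j. (\<lambda>n. root n (enn2real (Mpow P n i j))) \<longlonglongrightarrow> 1) \<and>
     (\<forall>i j. (\<Sum>n. Mpow P n i j) = \<infinity>) \<and>
     (\<forall>i j. \<exists>L. 0 < L \<and> (\<lambda>n. Mpow P n i j) \<longlonglongrightarrow> L) \<and>
     (\<exists>u v :: nat \<Rightarrow> real.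
        (\<forall>j. 0 < v j) \<and> (\<forall>i. 0 < u i) \<and>
        (\<forall>j. (\<Sum>i. ennreal (v i) * Mmat P i j) = ennreal (v j)) \<and>
        (\<forall>i. (\<Sum>j. Mmat P i j * ennreal (u j)) = ennreal (u i)) \<and>
        (\<Sum>j. ennreal (v j * u j)) = 1 \<and>
        \<comment> \<open>(ii)\<close>
        (\<Sum>j. ennreal (v j)) = 1 \<and> bdd_above (range u) \<and>
        \<comment> \<open>(iii)\<close>
        (\<lambda>N. \<Squnion>i. (\<Sum>j. if N < j then Mmat P i j else 0) / Mtot P i) \<longlonglongrightarrow> 0 \<and>
        (\<lambda>K. \<Squnion>i. (\<integral>\<^sup>+ z. ennreal (if K < Ztot z then real (Ztot z) else 0) \<partial>measure_pmf (P i))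
                    / Mtot P i) \<longlonglongrightarrow> 0 \<and>
        \<comment> \<open>(iv)\<close>
        (\<exists>m::nat. \<exists>c C::real. 0 < c \<and> 0 < C \<and>
           (\<forall>i j. Mmat P i j < ennreal (C * u i * v j)) \<and>
           (\<forall>j. ennreal (c * v j) < Mpow P m 0 j)))"

definition F_not_linear :: "(nat \<Rightarrow> (nat \<Rightarrow> nat) pmf) \<Rightarrow> bool" where
  "F_not_linear P \<longleftrightarrow> \<not> (\<forall>i s. (\<forall>j. 0 \<le> s j \<and> s j \<le> 1) \<longrightarrow>
       genf P i s = enn2real (\<Sum>j. Mmat P i j * ennreal (s j)))"

definition Sset :: "(nat \<Rightarrow> real) set" where
  "Sset = {s. (\<forall>j. 0 \<le> s j \<and> s j \<le> 1) \<and> s \<noteq> (\<lambda>_. 1)}"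

end

theory Submission
  imports Defs
begin
lemma two_step_ge:
  fixes A R a b :: real
  assumes "A \<ge> 0" "R \<ge> 0" "A \<ge> 1 - a" "R \<ge> 1 - b" "a \<ge> 0" "b \<ge> 0"
  shows "A * R \<ge> 1 - a - b"
proof (cases "a \<le> 1 \<and> b \<le> 1")
  case True
  have "(1-a)*(1-b) \<le> A * R" using assms True by (intro mult_mono) auto
  moreover have "(1-a)*(1-b) \<ge> 1 - a - b" using assms by (simp add: algebra_simps)
  ultimately show ?thesis by linarith
next
  case False
  have "A*R \<ge> 0" using assms by simp
  then show ?thesis using False assms by linarith
qed

lemma two_step_gt:
  fixes A R a b :: real
  assumes "A \<ge> 0" "R \<ge> 0" "A \<ge> 1 - a" "R \<ge> 1 - b" "a > 0" "b > 0"
  shows "A * R > 1 - a - b"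
proof (cases "a \<le> 1 \<and> b \<le> 1")
  case True
  have "(1-a)*(1-b) \<le> A * R" using assms True by (intro mult_mono) auto
  moreover have "(1-a)*(1-b) > 1 - a - b" using assms by (simp add: algebra_simps)
  ultimately show ?thesis by linarith
next
  case False
  have "A*R \<ge> 0" using assms by simp
  then show ?thesis using False assms by linarith
qed

lemma pow_ge:
  fixes x :: real assumes "0 \<le> x" "x \<le> 1"
  shows "x ^ k \<ge> 1 - real k * (1 - x)"
  using Bernoulli_inequality[of "x - 1" k] assms by (simp add: algebra_simps)

lemma pow_gt:
  fixes x :: real assumes "0 \<le> x" "x < 1" "k \<ge> 2"
  shows "x ^ k > 1 - real k * (1 - x)"
proof -
  obtain m where m: "k = Suc m" "m \<ge> 1" using assms by (cases k) auto
  have "x * x ^ m > 1 - (1 - x) - real m * (1 - x)"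
    using m assms by (intro two_step_gt pow_ge) auto
  then show ?thesis using m by (simp add: algebra_simps)
qed

lemma prod_ge:
  fixes t :: "nat \<Rightarrow> real" and z :: "nat \<Rightarrow> nat"
  assumes "finite S" "\<And>j. 0 \<le> t j \<and> t j \<le> 1"
  shows "(\<Prod>j\<in>S. t j ^ z j) \<ge> 1 - (\<Sum>j\<in>S. real (z j) * (1 - t j))"
  using assms(1)
proof (induction S rule: finite_induct)
  case empty then show ?case by simp
next
  case (insert a S)
  have "t a ^ z a * (\<Prod>j\<in>S. t j ^ z j) \<ge> 1 - real (z a) * (1 - t a) - (\<Sum>j\<in>S. real (z j) * (1 - t j))"
    using insert assms(2) by (intro two_step_ge pow_ge prod_nonneg sum_nonneg) (auto intro: mult_nonneg_nonneg)
  then show ?case using insert by (simp add: algebra_simps)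
qed

lemma prod_gt:
  fixes t :: "nat \<Rightarrow> real" and z :: "nat \<Rightarrow> nat"
  assumes "finite S" "\<And>j. 0 \<le> t j \<and> t j < 1" "(\<Sum>j\<in>S. z j) \<ge> 2"
  shows "(\<Prod>j\<in>S. t j ^ z j) > 1 - (\<Sum>j\<in>S. real (z j) * (1 - t j))"
  using assms(1,3)
proof (induction S rule: finite_induct)
  case empty then show ?case by simp
next
  case (insert a S)
  have t01: "\<And>j. 0 \<le> t j \<and> t j \<le> 1" using assms(2) by (simp add: less_imp_le)
  have Rnn: "(\<Prod>j\<in>S. t j ^ z j) \<ge> 0" using t01 by (intro prod_nonneg) auto
  have sumnn: "(\<Sum>j\<in>S. real (z j) * (1 - t j)) \<ge> 0" using t01 by (intro sum_nonneg) auto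
  have RS: "(\<Prod>j\<in>S. t j ^ z j) \<ge> 1 - (\<Sum>j\<in>S. real (z j) * (1 - t j))"
    using prod_ge[OF insert(1) t01] .
  have eq: "(\<Prod>j\<in>insert a S. t j ^ z j) = t a ^ z a * (\<Prod>j\<in>S. t j ^ z j)"
           "(\<Sum>j\<in>insert a S. real (z j) * (1 - t j)) = real (z a) * (1 - t a) + (\<Sum>j\<in>S. real (z j) * (1 - t j))"
           "(\<Sum>j\<in>insert a S. z j) = z a + (\<Sum>j\<in>S. z j)"
    using insert by auto
  consider "z a = 0" | "z a \<ge> 1" "(\<Sum>j\<in>S. z j) \<ge> 1" | "z a \<ge> 2" "(\<Sum>j\<in>S. z j) = 0"
    using insert(4) eq(3) by linarith
  then show ?case
  proof cases
    case 1 then show ?thesis using insert eq by simp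
  next
    case 2
    have "\<exists>j\<in>S. z j \<noteq> 0"
    proof (rule ccontr)
      assume "\<not> (\<exists>j\<in>S. z j \<noteq> 0)"
      then have "(\<Sum>j\<in>S. z j) = 0" by simp
      then show False using 2(2) by simp
    qed
    then obtain j where j: "j \<in> S" "z j \<ge> 1" by auto
    have "real (z j) * (1 - t j) > 0" using j assms(2)[of j] by simp
    moreover have "real (z j) * (1 - t j) \<le> (\<Sum>j\<in>S. real (z j) * (1 - t j))"
      using j insert(1) t01 by (intro member_le_sum) auto
    ultimately have pos: "(\<Sum>j\<in>S. real (z j) * (1 - t j)) > 0" by linarith
    have "t a ^ z a * (\<Prod>j\<in>S. t j ^ z j) > 1 - real (z a) * (1 - t a) - (\<Sum>j\<in>S. real (z j) * (1 - t j))"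
      using 2 assms(2)[of a] t01 pos RS Rnn by (intro two_step_gt pow_ge) auto
    then show ?thesis using eq by (simp add: algebra_simps)
  next
    case 3
    have "\<forall>j\<in>S. z j = 0" using 3 insert(1) by simp
    then have "(\<Prod>j\<in>S. t j ^ z j) = 1" "(\<Sum>j\<in>S. real (z j) * (1 - t j)) = 0" by auto
    then show ?thesis using eq 3 pow_gt[of "t a" "z a"] assms(2)[of a] by simp
  qed
qed

definition prz :: "(nat \<Rightarrow> real) \<Rightarrow> (nat \<Rightarrow> nat) \<Rightarrow> real" where
  "prz t z = (\<Prod>j\<in>supp z. t j ^ z j)"

definition unit01 :: "(nat \<Rightarrow> real) \<Rightarrow> bool" where
  "unit01 t \<longleftrightarrow> (\<forall>j. 0 \<le> t j \<and> t j \<le> 1)"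

lemma genf_prz: "genf P i t = measure_pmf.expectation (P i) (prz t)"
  unfolding genf_def prz_def ..

lemma prz_01: assumes "unit01 t" shows "0 \<le> prz t z" "prz t z \<le> 1"
  using assms unfolding prz_def unit01_def
  by (auto intro!: prod_nonneg prod_le_1 power_le_one)

lemma prz_int: assumes "unit01 t" shows "integrable (measure_pmf p) (prz t)"
  by (rule measure_pmf.integrable_const_bound[where B=1]) (use prz_01[OF assms] in auto)

lemma genf_01: assumes "unit01 t" shows "0 \<le> genf P i t" "genf P i t \<le> 1"
proof -
  show "0 \<le> genf P i t" unfolding genf_prz using prz_01[OF assms] by (intro integral_nonneg_AE) auto
  have "genf P i t \<le> measure_pmf.expectation (P i) (\<lambda>_. 1)" unfolding genf_prz
    using prz_01[OF assms] prz_int[OF assms] by (intro integral_mono) auto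
  then show "genf P i t \<le> 1" by simp
qed

lemma prz_mono: assumes "unit01 t" "\<And>j. t j \<le> t' j" shows "prz t z \<le> prz t' z"
  using assms unfolding prz_def unit01_def by (intro prod_mono) (auto intro!: power_mono zero_le_power)

lemma genf_mono: assumes "unit01 t" "unit01 t'" "\<And>j. t j \<le> t' j" shows "genf P i t \<le> genf P i t'"
  unfolding genf_prz using prz_int[OF assms(1)] prz_int[OF assms(2)] prz_mono[OF assms(1,3)]
  by (intro integral_mono) auto

lemma genfn_01: assumes "unit01 s" shows "unit01 (genfn P n s)"
  using assms by (induction n) (auto simp: unit01_def genf_01)

lemma genfn_mono: assumes "unit01 s" "unit01 s'" "\<And>j. s j \<le> s' j"
  shows "genfn P n s j \<le> genfn P n s' j"
  using assms(3)
proof (induction n arbitrary: j)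
  case 0 then show ?case by simp
next
  case (Suc n) then show ?case
    using genfn_01[OF assms(1)] genfn_01[OF assms(2)] by (auto intro!: genf_mono)
qed

lemma unit01_0: "unit01 (\<lambda>_. 0)" by (simp add: unit01_def)

lemma genfn0_inc: "genfn P n (\<lambda>_. 0) j \<le> genfn P (Suc n) (\<lambda>_. 0) j"
proof (induction n arbitrary: j)
  case 0 then show ?case using genf_01[OF unit01_0] by simp
next
  case (Suc n)
  have "unit01 (genfn P (Suc n) (\<lambda>_. 0))" by (rule genfn_01[OF unit01_0])
  then show ?case
    using genfn_01[OF unit01_0, of P n] Suc by (auto intro!: genf_mono)
qed

lemma one_minus_genf: assumes "unit01 t"
  shows "ennreal (1 - genf P i t) = (\<integral>\<^sup>+ z. ennreal (1 - prz t z) \<partial>measure_pmf (P i))"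
proof -
  have "1 - genf P i t = measure_pmf.expectation (P i) (\<lambda>z. 1 - prz t z)"
    unfolding genf_prz using prz_int[OF assms] by (subst Bochner_Integration.integral_diff) auto
  moreover have "(\<integral>\<^sup>+ z. ennreal (1 - prz t z) \<partial>measure_pmf (P i)) = measure_pmf.expectation (P i) (\<lambda>z. 1 - prz t z)"
    using prz_int[OF assms] prz_01[OF assms] by (intro nn_integral_eq_integral) auto
  ultimately show ?thesis by simp
qed

definition Lz :: "(nat \<Rightarrow> real) \<Rightarrow> (nat \<Rightarrow> nat) \<Rightarrow> ennreal" where
  "Lz x z = (\<Sum>j. ennreal (real (z j)) * ennreal (x j))"

lemma Lz_finite: assumes "finite (supp z)" "\<And>j. 0 \<le> x j"
  shows "Lz x z = ennreal (\<Sum>j\<in>supp z. real (z j) * x j)"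
proof -
  have "Lz x z = (\<Sum>j\<in>supp z. ennreal (real (z j)) * ennreal (x j))"
    unfolding Lz_def by (rule suminf_finite[OF assms(1)]) (auto simp: supp_def)
  also have "\<dots> = (\<Sum>j\<in>supp z. ennreal (real (z j) * x j))"
    using assms(2) by (simp add: ennreal_mult)
  also have "\<dots> = ennreal (\<Sum>j\<in>supp z. real (z j) * x j)"
    using assms(2) by (intro sum_ennreal) auto
  finally show ?thesis .
qed

lemma Lz_integral: "(\<integral>\<^sup>+ z. Lz x z \<partial>measure_pmf p') = (\<Sum>j. (\<integral>\<^sup>+ z. ennreal (real (z j)) \<partial>measure_pmf p') * ennreal (x j))"
  unfolding Lz_def by (subst nn_integral_suminf) (auto simp: nn_integral_multc)

lemma Lz_Mmat: "(\<integral>\<^sup>+ z. Lz x z \<partial>measure_pmf (P i)) = (\<Sum>j. Mmat P i j * ennreal (x j))"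
  unfolding Lz_integral Mmat_def ..

lemma prz_lin: assumes "unit01 t" "finite (supp z)"
  shows "1 - prz t z \<le> (\<Sum>j\<in>supp z. real (z j) * (1 - t j))"
  using prod_ge[OF assms(2), of t z] assms(1) unfolding prz_def unit01_def by auto

lemma prz_lin_enn: assumes "unit01 t" "finite (supp z)"
  shows "ennreal (1 - prz t z) \<le> Lz (\<lambda>j. 1 - t j) z"
  using prz_lin[OF assms] assms by (subst Lz_finite) (auto simp: unit01_def intro: ennreal_leI)

lemma lin_bound: assumes "valid_offspring P" "unit01 t"
  shows "ennreal (1 - genf P i t) \<le> (\<Sum>j. Mmat P i j * ennreal (1 - t j))"
proof -
  have "ennreal (1 - genf P i t) = (\<integral>\<^sup>+ z. ennreal (1 - prz t z) \<partial>measure_pmf (P i))"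
    by (rule one_minus_genf[OF assms(2)])
  also have "\<dots> \<le> (\<integral>\<^sup>+ z. Lz (\<lambda>j. 1 - t j) z \<partial>measure_pmf (P i))"
    using assms(1) unfolding valid_offspring_def
    by (intro nn_integral_mono_AE) (auto simp: AE_measure_pmf_iff intro!: prz_lin_enn[OF assms(2)])
  finally show ?thesis unfolding Lz_Mmat .
qed

lemma ennsum_swap: "(\<Sum>i. \<Sum>j. f i j :: ennreal) = (\<Sum>j. \<Sum>i. f i j)"
proof -
  have "(\<Sum>i. \<Sum>j. f i j) = (\<Sum>i. \<integral>\<^sup>+ j. f i j \<partial>count_space UNIV)"
    by (simp add: nn_integral_count_space_nat)
  also have "\<dots> = (\<integral>\<^sup>+ j. (\<Sum>i. f i j) \<partial>count_space UNIV)"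
    by (rule nn_integral_suminf[symmetric]) auto
  also have "\<dots> = (\<Sum>j. \<Sum>i. f i j)" by (simp add: nn_integral_count_space_nat)
  finally show ?thesis .
qed

lemma nn_eq_AE:
  fixes f g :: "'a \<Rightarrow> ennreal"
  assumes "f \<in> borel_measurable M" "g \<in> borel_measurable M"
    "AE x in M. f x \<le> g x" "integral\<^sup>N M f = integral\<^sup>N M g" "integral\<^sup>N M f \<noteq> \<top>"
  shows "AE x in M. f x = g x"
proof -
  have "(\<integral>\<^sup>+ x. g x - f x \<partial>M) = integral\<^sup>N M g - integral\<^sup>N M f"
    using assms by (intro nn_integral_diff) auto
  also have "\<dots> = 0" using assms(4,5) by (simp add: ennreal_diff_self)
  finally have "AE x in M. g x - f x = 0" using assms by (subst nn_integral_0_iff_AE[symmetric]) auto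
  then show ?thesis using assms(3) by eventually_elim (auto dest: ennreal_minus_eq_0)
qed

lemma sum_eq_le:
  fixes a b :: "nat \<Rightarrow> ennreal"
  assumes "\<And>i. a i \<le> b i" "(\<Sum>i. a i) = (\<Sum>i. b i)" "(\<Sum>i. a i) \<noteq> \<top>"
  shows "a i = b i"
proof -
  have "AE i in count_space UNIV. a i = b i"
    using assms by (intro nn_eq_AE) (auto simp: nn_integral_count_space_nat)
  then show ?thesis by (simp add: AE_count_space)
qed

lemma Mpow_fix:
  assumes "\<And>i. (\<Sum>j. Mmat P i j * x j) = x i"
  shows "(\<Sum>k. Mpow P n i k * x k) = x i"
proof (induction n arbitrary: i)
  case 0
  have "(\<Sum>k. Mpow P 0 i k * x k) = (\<Sum>k\<in>{i}. Mpow P 0 i k * x k)"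
    by (rule suminf_finite) auto
  then show ?case by simp
next
  case (Suc n)
  have "(\<Sum>k. Mpow P (Suc n) i k * x k) = (\<Sum>k. (\<Sum>l. Mpow P n i l * Mmat P l k) * x k)"
    by (simp only: Mpow.simps)
  also have "\<dots> = (\<Sum>k. \<Sum>l. Mpow P n i l * (Mmat P l k * x k))"
    by (simp only: ennreal_suminf_multc[symmetric] mult.assoc)
  also have "\<dots> = (\<Sum>l. \<Sum>k. Mpow P n i l * (Mmat P l k * x k))"
    by (rule ennsum_swap)
  also have "\<dots> = (\<Sum>l. Mpow P n i l * x l)" using assms by (simp only: ennreal_suminf_cmult)
  finally show ?case using Suc by simp
qed

lemma enn_term_le: "f k \<le> (\<Sum>i. f i :: ennreal)"
  using sum_le_suminf[of f "{k}"] by (simp add: summableI)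

lemma fix_pos:
  assumes "\<And>i. (\<Sum>j. Mmat P i j * x j) = x i" "\<forall>i j. \<exists>n\<ge>1. 0 < Mpow P n i j" "x k > 0"
  shows "x i > 0"
proof -
  obtain n where n: "0 < Mpow P n i k" using assms(2) by blast
  have "Mpow P n i k * x k \<le> (\<Sum>l. Mpow P n i l * x l)" by (rule enn_term_le)
  also have "\<dots> = x i" by (rule Mpow_fix[OF assms(1)])
  finally show ?thesis using n assms(3)
    by (metis ennreal_zero_less_mult_iff order_less_le_trans)
qed

definition rr :: "(nat \<Rightarrow> (nat \<Rightarrow> nat) pmf) \<Rightarrow> nat \<Rightarrow> real" where
  "rr P j = (SUP n. genfn P n (\<lambda>_. 0) j)"

lemma rr_lim: "(\<lambda>n. genfn P n (\<lambda>_. 0) j) \<longlonglongrightarrow> rr P j"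
  unfolding rr_def
proof (rule LIMSEQ_incseq_SUP)
  show "bdd_above (range (\<lambda>n. genfn P n (\<lambda>_. 0) j))"
    using genfn_01[OF unit01_0] by (auto simp: unit01_def intro!: bdd_aboveI[where M=1])
  show "incseq (\<lambda>n. genfn P n (\<lambda>_. 0) j)" by (rule incseq_SucI) (rule genfn0_inc)
qed

lemma rr_01: "unit01 (rr P)"
  unfolding unit01_def
proof
  fix j
  have a: "\<And>n. 0 \<le> genfn P n (\<lambda>_. 0) j \<and> genfn P n (\<lambda>_. 0) j \<le> 1"
    using genfn_01[OF unit01_0] by (auto simp: unit01_def)
  show "0 \<le> rr P j \<and> rr P j \<le> 1"
  proof
    show "0 \<le> rr P j" by (rule LIMSEQ_le_const[OF rr_lim]) (use a in auto)
    show "rr P j \<le> 1" by (rule LIMSEQ_le_const2[OF rr_lim]) (use a in auto)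
  qed
qed

lemma rr_fix: assumes "valid_offspring P" shows "genf P i (rr P) = rr P i"
proof -
  let ?a = "\<lambda>n. genfn P n (\<lambda>_. 0)"
  have "(\<lambda>n. measure_pmf.expectation (P i) (prz (?a n))) \<longlonglongrightarrow> measure_pmf.expectation (P i) (prz (rr P))"
  proof (rule integral_dominated_convergence[where w="\<lambda>_. 1"])
    show "AE z in measure_pmf (P i). (\<lambda>n. prz (?a n) z) \<longlonglongrightarrow> prz (rr P) z"
      unfolding prz_def by (auto intro!: tendsto_prod tendsto_power rr_lim)
    show "\<And>n. AE z in measure_pmf (P i). norm (prz (?a n) z) \<le> 1"
      using prz_01[OF genfn_01[OF unit01_0]] by auto
  qed auto
  then have "(\<lambda>n. ?a (Suc n) i) \<longlonglongrightarrow> genf P i (rr P)" by (simp add: genf_prz)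
  moreover have "(\<lambda>n. ?a (Suc n) i) \<longlonglongrightarrow> rr P i" using rr_lim by (rule LIMSEQ_Suc)
  ultimately show ?thesis by (rule LIMSEQ_unique)
qed

lemma Mtot_eq: assumes "valid_offspring P" shows "Mtot P i = (\<Sum>j. Mmat P i j)"
proof -
  have "Mtot P i = (\<integral>\<^sup>+ z. Lz (\<lambda>_. 1) z \<partial>measure_pmf (P i))"
    unfolding Mtot_def
  proof (intro nn_integral_cong_AE)
    show "AE z in measure_pmf (P i). ennreal (real (Ztot z)) = Lz (\<lambda>_. 1) z"
      using assms unfolding valid_offspring_def AE_measure_pmf_iff
      by (auto simp: Lz_finite Ztot_def)
  qed
  then show ?thesis unfolding Lz_Mmat by simp
qed

lemma Ztot1: assumes "finite (supp z)" "Ztot z = 1" shows "\<exists>j. supp z = {j} \<and> z j = 1"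
proof -
  have ne: "supp z \<noteq> {}" using assms by (auto simp: Ztot_def)
  then obtain j where j: "j \<in> supp z" by auto
  have "z j \<le> Ztot z" unfolding Ztot_def using assms(1) j by (intro member_le_sum) auto
  then have zj: "z j = 1" using j assms(2) by (auto simp: supp_def)
  have "supp z = {j}"
  proof (rule ccontr)
    assume "supp z \<noteq> {j}"
    then obtain k where k: "k \<in> supp z" "k \<noteq> j" using j by auto
    have "(\<Sum>l\<in>{j,k}. z l) \<le> Ztot z" unfolding Ztot_def using assms(1) j k
      by (intro sum_mono2) auto
    then show False using k zj assms(2) by (auto simp: supp_def)
  qed
  then show ?thesis using zj by auto
qed

lemma linear_if_Ztot1:
  assumes "valid_offspring P" "\<And>i z. z \<in> set_pmf (P i) \<Longrightarrow> Ztot z = 1"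
  shows "\<not> F_not_linear P"
  unfolding F_not_linear_def not_not
proof (intro allI impI)
  fix i and s :: "nat \<Rightarrow> real" assume s: "\<forall>j. 0 \<le> s j \<and> s j \<le> 1"
  then have u: "unit01 s" by (simp add: unit01_def)
  have "ennreal (genf P i s) = (\<integral>\<^sup>+ z. ennreal (prz s z) \<partial>measure_pmf (P i))"
    unfolding genf_prz using prz_int[OF u] prz_01[OF u] by (intro nn_integral_eq_integral[symmetric]) auto
  also have "\<dots> = (\<integral>\<^sup>+ z. Lz s z \<partial>measure_pmf (P i))"
  proof (intro nn_integral_cong_AE)
    show "AE z in measure_pmf (P i). ennreal (prz s z) = Lz s z"
      unfolding AE_measure_pmf_iff
    proof
      fix z assume z: "z \<in> set_pmf (P i)"
      have fin: "finite (supp z)" using assms(1) z by (auto simp: valid_offspring_def)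
      obtain j where "supp z = {j}" "z j = 1" using Ztot1[OF fin assms(2)[OF z]] by auto
      then show "ennreal (prz s z) = Lz s z" using s by (simp add: Lz_finite[OF fin] prz_def)
    qed
  qed
  finally have "ennreal (genf P i s) = (\<Sum>j. Mmat P i j * ennreal (s j))" unfolding Lz_Mmat .
  then show "genf P i s = enn2real (\<Sum>j. Mmat P i j * ennreal (s j))"
    using genf_01[OF u] by (metis enn2real_ennreal)
qed

lemma M10_unpack:
  assumes "in_M10 P"
  obtains u v C where "\<forall>i j. \<exists>n\<ge>1. 0 < Mpow P n i j" "\<forall>j. 0 < v j" "\<forall>i. 0 < u i"
    "\<forall>j. (\<Sum>i. ennreal (v i) * Mmat P i j) = ennreal (v j)"
    "(\<Sum>j. ennreal (v j)) = 1" "bdd_above (range u)"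
    "(\<lambda>K. \<Squnion>i. (\<integral>\<^sup>+ z. ennreal (if K < Ztot z then real (Ztot z) else 0) \<partial>measure_pmf (P i))
                    / Mtot P i) \<longlonglongrightarrow> 0"
    "0 < C" "\<forall>i j. Mmat P i j < ennreal (C * u i * v j)"
  using assms unfolding in_M10_def by (elim conjE exE) (rule that; assumption)

lemma vswap:
  assumes "\<forall>j. (\<Sum>i. ennreal (v i) * Mmat P i j) = ennreal (v j)"
  shows "(\<Sum>i. ennreal (v i) * (\<Sum>j. Mmat P i j * y j)) = (\<Sum>j. ennreal (v j) * y j)"
proof -
  have "(\<Sum>i. ennreal (v i) * (\<Sum>j. Mmat P i j * y j)) = (\<Sum>i. \<Sum>j. ennreal (v i) * (Mmat P i j * y j))"
    by (simp only: ennreal_suminf_cmult)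
  also have "\<dots> = (\<Sum>j. \<Sum>i. ennreal (v i) * Mmat P i j * y j)"
    by (subst ennsum_swap) (simp only: mult.assoc)
  also have "\<dots> = (\<Sum>j. (\<Sum>i. ennreal (v i) * Mmat P i j) * y j)"
    by (simp only: ennreal_suminf_multc)
  also have "\<dots> = (\<Sum>j. ennreal (v j) * y j)" using assms by simp
  finally show ?thesis .
qed

lemma enn_cancel:
  fixes a b :: ennreal
  assumes "c * a = c * b" "c \<noteq> 0" "c \<noteq> \<top>" shows "a = b"
  using assms by (metis antisym ennreal_mult_le_mult_iff order_refl)

lemma extinct:
  assumes V: "valid_offspring P" and irr: "\<forall>i j. \<exists>n\<ge>1. 0 < Mpow P n i j"
    and vpos: "\<forall>j. 0 < v j" and vM: "\<forall>j. (\<Sum>i. ennreal (v i) * Mmat P i j) = ennreal (v j)"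
    and v1: "(\<Sum>j. ennreal (v j)) = 1" and NL: "F_not_linear P"
  shows "rr P k = 1"
proof (rule ccontr)
  assume nk: "rr P k \<noteq> 1"
  define x where "x j = ennreal (1 - rr P j)" for j
  have r01: "\<And>j. 0 \<le> rr P j \<and> rr P j \<le> 1" using rr_01[of P] by (simp add: unit01_def)
  have x_le: "x i \<le> (\<Sum>j. Mmat P i j * x j)" for i
    using lin_bound[OF V rr_01[of P], of i] rr_fix[OF V, of i] unfolding x_def by simp
  have x1: "x i \<le> 1" for i unfolding x_def using r01[of i] by simp
  have vx_le: "ennreal (v i) * x i \<le> ennreal (v i)" for i
    using mult_left_mono[OF x1[of i], of "ennreal (v i)"] by simp
  have fin: "(\<Sum>i. ennreal (v i) * x i) \<noteq> \<top>"
  proof -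
    have "(\<Sum>i. ennreal (v i) * x i) \<le> (\<Sum>i. ennreal (v i))"
      using vx_le by (intro suminf_le) (auto intro: summableI)
    then show ?thesis using v1 by (metis ennreal_one_neq_top top.extremum_uniqueI)
  qed
  have xfix: "(\<Sum>j. Mmat P i j * x j) = x i" for i
  proof -
    have le: "\<And>i. ennreal (v i) * x i \<le> ennreal (v i) * (\<Sum>j. Mmat P i j * x j)"
      using x_le by (intro mult_left_mono) auto
    have eqs: "(\<Sum>i. ennreal (v i) * x i) = (\<Sum>i. ennreal (v i) * (\<Sum>j. Mmat P i j * x j))"
      by (rule vswap[OF vM, of x, symmetric])
    have eq: "ennreal (v i) * x i = ennreal (v i) * (\<Sum>j. Mmat P i j * x j)"
      by (rule sum_eq_le[of "\<lambda>i. ennreal (v i) * x i" "\<lambda>i. ennreal (v i) * (\<Sum>j. Mmat P i j * x j)", OF le eqs fin])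
    have vi: "ennreal (v i) \<noteq> 0" "ennreal (v i) \<noteq> \<top>" using vpos[rule_format, of i] by simp_all
    show ?thesis using enn_cancel[OF eq vi] by simp
  qed
  have xk: "x k > 0" using nk r01[of k] unfolding x_def by simp
  have xpos: "x i > 0" for i by (rule fix_pos[OF xfix irr xk])
  have rlt: "0 \<le> rr P i \<and> rr P i < 1" for i using xpos[of i] r01[of i] unfolding x_def by simp
  have Z1: "Ztot z \<le> 1" if z: "z \<in> set_pmf (P i)" for i z
  proof -
    have finz: "finite (supp z)" using V z by (auto simp: valid_offspring_def)
    have e1: "(\<integral>\<^sup>+ z. ennreal (1 - prz (rr P) z) \<partial>measure_pmf (P i)) = x i"
      using one_minus_genf[OF rr_01[of P], of P i] rr_fix[OF V, of i] unfolding x_def by simp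
    have e2: "(\<integral>\<^sup>+ z. Lz (\<lambda>j. 1 - rr P j) z \<partial>measure_pmf (P i)) = x i"
      unfolding Lz_Mmat using xfix[of i] unfolding x_def .
    have "AE z in measure_pmf (P i). ennreal (1 - prz (rr P) z) = Lz (\<lambda>j. 1 - rr P j) z"
    proof (rule nn_eq_AE)
      show "AE z in measure_pmf (P i). ennreal (1 - prz (rr P) z) \<le> Lz (\<lambda>j. 1 - rr P j) z"
        unfolding AE_measure_pmf_iff
      proof
        fix y assume "y \<in> set_pmf (P i)"
        then have "finite (supp y)" using V by (auto simp: valid_offspring_def)
        then show "ennreal (1 - prz (rr P) y) \<le> Lz (\<lambda>j. 1 - rr P j) y"
          by (rule prz_lin_enn[OF rr_01[of P]])
      qed
      show "(\<integral>\<^sup>+ z. ennreal (1 - prz (rr P) z) \<partial>measure_pmf (P i)) = (\<integral>\<^sup>+ z. Lz (\<lambda>j. 1 - rr P j) z \<partial>measure_pmf (P i))"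
        unfolding e1 e2 ..
      show "(\<integral>\<^sup>+ z. ennreal (1 - prz (rr P) z) \<partial>measure_pmf (P i)) \<noteq> \<top>"
        unfolding e1 x_def by simp
    qed simp_all
    then have "ennreal (1 - prz (rr P) z) = Lz (\<lambda>j. 1 - rr P j) z"
      using z unfolding AE_measure_pmf_iff by blast
    also have "\<dots> = ennreal (\<Sum>j\<in>supp z. real (z j) * (1 - rr P j))"
      using r01 by (intro Lz_finite[OF finz]) simp
    finally have eq0: "ennreal (1 - prz (rr P) z) = ennreal (\<Sum>j\<in>supp z. real (z j) * (1 - rr P j))" .
    have nn1: "0 \<le> 1 - prz (rr P) z" using prz_01[OF rr_01[of P], of z] by simp
    have nn2: "0 \<le> (\<Sum>j\<in>supp z. real (z j) * (1 - rr P j))" using r01 by (intro sum_nonneg) simp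
    have eq: "1 - prz (rr P) z = (\<Sum>j\<in>supp z. real (z j) * (1 - rr P j))"
      using eq0 ennreal_inj[OF nn1 nn2] by simp
    show ?thesis
    proof (rule ccontr)
      assume "\<not> Ztot z \<le> 1"
      then have ge2: "(\<Sum>j\<in>supp z. z j) \<ge> 2" by (simp add: Ztot_def)
      have "(\<Prod>j\<in>supp z. rr P j ^ z j) > 1 - (\<Sum>j\<in>supp z. real (z j) * (1 - rr P j))"
        by (rule prod_gt[OF finz rlt ge2])
      then show False using eq unfolding prz_def by simp
    qed
  qed
  have one: "(\<integral>\<^sup>+ z. 1 \<partial>measure_pmf (P i)) = 1" for i
    by simp
  have Mtot_le: "Mtot P i \<le> 1" for i
  proof -
    have "AE z in measure_pmf (P i). ennreal (real (Ztot z)) \<le> 1"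
      unfolding AE_measure_pmf_iff using Z1[of _ i] by simp
    then have "Mtot P i \<le> (\<integral>\<^sup>+ z. 1 \<partial>measure_pmf (P i))"
      unfolding Mtot_def by (rule nn_integral_mono_AE)
    then show ?thesis unfolding one .
  qed
  have sumM: "(\<Sum>i. ennreal (v i) * Mtot P i) = (\<Sum>i. ennreal (v i))"
  proof -
    have "(\<Sum>i. ennreal (v i) * Mtot P i) = (\<Sum>i. ennreal (v i) * (\<Sum>j. Mmat P i j * 1))"
      by (simp only: Mtot_eq[OF V] mult_1_right)
    also have "\<dots> = (\<Sum>j. ennreal (v j) * 1)" by (rule vswap[OF vM])
    finally show ?thesis by (simp only: mult_1_right)
  qed
  have Mtot1: "Mtot P i = 1" for i
  proof -
    have le: "\<And>i. ennreal (v i) * Mtot P i \<le> ennreal (v i)"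
      using mult_left_mono[OF Mtot_le] by (metis mult_1_right zero_le)
    have ntop: "(\<Sum>i. ennreal (v i) * Mtot P i) \<noteq> \<top>" unfolding sumM v1 by simp
    have "ennreal (v i) * Mtot P i = ennreal (v i)"
      by (rule sum_eq_le[of "\<lambda>i. ennreal (v i) * Mtot P i" "\<lambda>i. ennreal (v i)", OF le sumM ntop])
    then have eq: "ennreal (v i) * Mtot P i = ennreal (v i) * 1" by simp
    have vi: "ennreal (v i) \<noteq> 0" "ennreal (v i) \<noteq> \<top>" using vpos[rule_format, of i] by simp_all
    show ?thesis by (rule enn_cancel[OF eq vi])
  qed
  have "Ztot z = 1" if z: "z \<in> set_pmf (P i)" for i z
  proof -
    have "AE z in measure_pmf (P i). ennreal (real (Ztot z)) = 1"
    proof (rule nn_eq_AE)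
      show "AE z in measure_pmf (P i). ennreal (real (Ztot z)) \<le> 1"
        unfolding AE_measure_pmf_iff using Z1[of _ i] by simp
      show "(\<integral>\<^sup>+ z. ennreal (real (Ztot z)) \<partial>measure_pmf (P i)) = (\<integral>\<^sup>+ z. 1 \<partial>measure_pmf (P i))"
        using Mtot1[of i] unfolding Mtot_def one .
      show "(\<integral>\<^sup>+ z. ennreal (real (Ztot z)) \<partial>measure_pmf (P i)) \<noteq> \<top>"
        using Mtot1[of i] unfolding Mtot_def by simp
    qed simp_all
    then have "ennreal (real (Ztot z)) = 1" using z unfolding AE_measure_pmf_iff by blast
    then show ?thesis by simp
  qed
  then show False using linear_if_Ztot1[OF V] NL by blast
qed

lemma w_lim:
  assumes "summable v" "\<And>j. 0 \<le> v j" "\<And>j. rr P j = 1"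
  shows "(\<lambda>n. \<Sum>j. v j * (1 - genfn P n (\<lambda>_. 0) j)) \<longlonglongrightarrow> 0"
proof -
  have a01: "\<And>n j. 0 \<le> genfn P n (\<lambda>_. 0) j \<and> genfn P n (\<lambda>_. 0) j \<le> 1"
    using genfn_01[OF unit01_0] by (simp add: unit01_def)
  have "eventually (\<lambda>n. summable (\<lambda>k. norm (v k * (1 - genfn P n (\<lambda>_. 0) k)))) sequentially \<and>
        summable (\<lambda>n. norm ((\<lambda>k. v k * (1 - rr P k)) n)) \<and>
        ((\<lambda>n. \<Sum>k. v k * (1 - genfn P n (\<lambda>_. 0) k)) \<longlonglongrightarrow> (\<Sum>k. v k * (1 - rr P k)))"
  proof (rule tannerys_theorem[where M=v])
    show "\<And>k. (\<lambda>n. v k * (1 - genfn P n (\<lambda>_. 0) k)) \<longlonglongrightarrow> v k * (1 - rr P k)"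
      by (intro tendsto_intros rr_lim)
    show "\<forall>\<^sub>F (k, n) in at_top \<times>\<^sub>F sequentially. norm (v k * (1 - genfn P n (\<lambda>_. 0) k)) \<le> v k"
    proof (rule always_eventually, clarify)
      fix k n
      have "0 \<le> 1 - genfn P n (\<lambda>_. 0) k" "1 - genfn P n (\<lambda>_. 0) k \<le> 1" using a01[of n k] by auto
      then show "norm (v k * (1 - genfn P n (\<lambda>_. 0) k)) \<le> v k"
        using assms(2)[of k] by (simp add: abs_mult mult_left_le)
    qed
  qed (use assms in auto)
  then show ?thesis using assms(3) by simp
qed

lemma unif_bound:
  assumes V: "valid_offspring P" and vnn: "\<And>j. 0 \<le> v j" and sv: "summable v"
    and MC: "\<forall>i j. Mmat P i j < ennreal (C * u i * v j)" and C: "0 < C"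
    and uU: "\<And>i. 0 < u i \<and> u i \<le> U" and s: "unit01 s"
  shows "Qn P (Suc n) s i \<le> C * U * (\<Sum>j. v j * (1 - genfn P n (\<lambda>_. 0) j))"
proof -
  let ?a = "genfn P n (\<lambda>_. 0)"
  define w where "w = (\<Sum>j. v j * (1 - ?a j))"
  have a01: "\<And>j. 0 \<le> ?a j \<and> ?a j \<le> 1"
    using genfn_01[OF unit01_0] by (simp add: unit01_def)
  have tnn: "\<And>j. 0 \<le> v j * (1 - ?a j)" using a01 vnn by simp
  have sw: "summable (\<lambda>j. v j * (1 - ?a j))"
    by (rule summable_comparison_test[OF _ sv]) (use a01 vnn in \<open>auto intro!: exI[of _ 0] simp: abs_mult mult_left_le\<close>)
  have wnn: "0 \<le> w" unfolding w_def using tnn sw by (simp add: suminf_nonneg)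
  have "ennreal (1 - genf P i ?a) \<le> (\<Sum>j. Mmat P i j * ennreal (1 - ?a j))"
    by (rule lin_bound[OF V genfn_01[OF unit01_0]])
  also have "\<dots> \<le> (\<Sum>j. ennreal (C * u i) * ennreal (v j * (1 - ?a j)))"
  proof (rule suminf_le)
    fix j
    have "Mmat P i j \<le> ennreal (C * u i * v j)" using MC by (simp add: less_imp_le)
    then have "Mmat P i j * ennreal (1 - ?a j) \<le> ennreal (C * u i * v j) * ennreal (1 - ?a j)"
      by (rule mult_right_mono) simp
    also have "\<dots> = ennreal (C * u i) * ennreal (v j * (1 - ?a j))"
      using C uU[of i] vnn[of j] a01[of j] by (simp add: ennreal_mult[symmetric] mult.assoc)
    finally show "Mmat P i j * ennreal (1 - ?a j) \<le> ennreal (C * u i) * ennreal (v j * (1 - ?a j))" .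
  qed (auto intro: summableI)
  also have "\<dots> = ennreal (C * u i) * ennreal w"
    unfolding w_def ennreal_suminf_cmult using suminf_ennreal2[OF tnn sw] by simp
  also have "\<dots> = ennreal (C * u i * w)"
    using C uU[of i] wnn by (simp add: ennreal_mult)
  finally have "1 - genf P i ?a \<le> C * u i * w"
    using C uU[of i] wnn by (subst (asm) ennreal_le_iff) auto
  moreover have "C * u i * w \<le> C * U * w"
    using C uU[of i] wnn by (intro mult_right_mono mult_left_mono) auto
  moreover have "genfn P (Suc n) (\<lambda>_. 0) i \<le> genfn P (Suc n) s i"
    by (rule genfn_mono[OF unit01_0 s]) (use s in \<open>simp add: unit01_def\<close>)
  ultimately show ?thesis unfolding Qn_def w_def by simp
qed

lemma prod_sub_le:
  fixes t :: "nat \<Rightarrow> real"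
  assumes "finite B" "A \<subseteq> B" "\<And>j. 0 \<le> t j \<and> t j \<le> 1"
  shows "(\<Prod>j\<in>B. t j ^ z j) \<le> (\<Prod>j\<in>A. t j ^ z j)"
proof -
  have "(\<Prod>j\<in>B. t j ^ z j) = (\<Prod>j\<in>B - A. t j ^ z j) * (\<Prod>j\<in>A. t j ^ z j)"
    by (rule prod.subset_diff[OF assms(2,1)])
  also have "\<dots> \<le> 1 * (\<Prod>j\<in>A. t j ^ z j)"
    using assms by (intro mult_right_mono prod_le_1 prod_nonneg) (auto intro: power_le_one)
  finally show ?thesis by simp
qed

lemma sum_lessThan_le_Ztot:
  assumes "finite (supp z)" shows "(\<Sum>j<N. real (z j)) \<le> real (Ztot z)"
proof -
  have "(\<Sum>j<N. z j) = (\<Sum>j\<in>{..<N} \<inter> supp z. z j)"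
    by (rule sum.mono_neutral_right) (auto simp: supp_def)
  also have "\<dots> \<le> (\<Sum>j\<in>supp z. z j)"
    by (rule sum_mono2[OF assms]) auto
  finally have "(\<Sum>j<N. z j) \<le> Ztot z" unfolding Ztot_def .
  then show ?thesis by (metis of_nat_le_iff of_nat_sum)
qed

lemma zj_le_Ztot:
  assumes "finite (supp z)" shows "real (z j) \<le> real (Ztot z)"
proof -
  have "(\<Sum>i<Suc j. real (z i)) = (\<Sum>i<j. real (z i)) + real (z j)" by simp
  moreover have "0 \<le> (\<Sum>i<j. real (z i))" by (intro sum_nonneg) auto
  ultimately show ?thesis using sum_lessThan_le_Ztot[OF assms, of "Suc j"] by linarith
qed

lemma nfun_pt:
  assumes t: "unit01 t" and fin: "finite (supp z)" and Qb: "0 \<le> Qb" "\<And>l. 1 - t l \<le> Qb"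
  shows "0 \<le> (\<Sum>k<z j. t j ^ k) * (1 - (\<Prod>l\<in>{l\<in>supp z. j < l}. t l ^ z l))"
    and "(\<Sum>k<z j. t j ^ k) * (1 - (\<Prod>l\<in>{l\<in>supp z. j < l}. t l ^ z l))
         \<le> real (z j) * min 1 (real (Ztot z) * Qb)"
proof -
  have t01: "\<And>l. 0 \<le> t l \<and> t l \<le> 1" using t by (simp add: unit01_def)
  have A1: "0 \<le> (\<Sum>k<z j. t j ^ k)" using t01 by (intro sum_nonneg) auto
  have A2: "(\<Sum>k<z j. t j ^ k) \<le> real (z j)"
    using sum_bounded_above[of "{..<z j}" "\<lambda>k. t j ^ k" 1] t01[of j] by (auto intro: power_le_one)
  let ?B = "1 - (\<Prod>l\<in>{l\<in>supp z. j < l}. t l ^ z l)"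
  have P1: "(\<Prod>l\<in>{l\<in>supp z. j < l}. t l ^ z l) \<le> 1" using t01 by (intro prod_le_1) (auto intro: power_le_one)
  have P0: "0 \<le> (\<Prod>l\<in>{l\<in>supp z. j < l}. t l ^ z l)" using t01 by (intro prod_nonneg) auto
  have B1: "0 \<le> ?B" using P1 by simp
  have "?B \<le> 1 - prz t z" unfolding prz_def using prod_sub_le[of "supp z" "{l\<in>supp z. j < l}" t z, OF fin _ t01] by auto
  also have "\<dots> \<le> (\<Sum>l\<in>supp z. real (z l) * (1 - t l))" by (rule prz_lin[OF t fin])
  also have "\<dots> \<le> (\<Sum>l\<in>supp z. real (z l) * Qb)" using Qb(2) by (intro sum_mono mult_left_mono) auto
  also have "\<dots> = real (Ztot z) * Qb" unfolding Ztot_def by (simp add: sum_distrib_right)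
  finally have B2: "?B \<le> min 1 (real (Ztot z) * Qb)" using P0 by simp
  show "0 \<le> (\<Sum>k<z j. t j ^ k) * ?B" using A1 B1 by simp
  show "(\<Sum>k<z j. t j ^ k) * ?B \<le> real (z j) * min 1 (real (Ztot z) * Qb)"
    using A1 A2 B1 B2 by (intro mult_mono) auto
qed

lemma ratio_bound:
  assumes V: "valid_offspring P" and s: "unit01 s" and QG: "\<And>j. Qn P m s j \<le> G"
  shows "ennreal (\<bar>eps1 P m s i\<bar> / Qsup P m s)
    \<le> ennreal (real K * G) + (\<integral>\<^sup>+ z. ennreal (if K < Ztot z then real (Ztot z) else 0) \<partial>measure_pmf (P i)) / Mtot P i"
proof -
  define t where "t = genfn P m s"
  have t: "unit01 t" unfolding t_def by (rule genfn_01[OF s])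
  have t01: "\<And>l. 0 \<le> t l \<and> t l \<le> 1" using t by (simp add: unit01_def)
  have Qt: "Qn P m s j = 1 - t j" for j unfolding Qn_def t_def ..
  define Qb where "Qb = Qsup P m s"
  have bdd: "bdd_above (range (Qn P m s))" using t01 unfolding Qt by (intro bdd_aboveI[where M=1]) auto
  have Qle: "Qn P m s j \<le> Qb" for j unfolding Qb_def Qsup_def by (rule cSUP_upper[OF _ bdd]) simp
  have Qbnn: "0 \<le> Qb" using Qle[of 0] t01[of 0] unfolding Qt by simp
  have QbG: "Qb \<le> G" unfolding Qb_def Qsup_def by (rule cSUP_least) (auto intro: QG)
  have Gnn: "0 \<le> G" using Qbnn QbG by simp
  define T where "T z = (if K < Ztot z then real (Ztot z) else 0)" for z
  show ?thesis
  proof (cases "Mtot P i = \<top> \<or> Mtot P i = 0")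
    case True
    then have "eps1 P m s i = 0" unfolding eps1_def by auto
    then show ?thesis by simp
  next
    case False
    define Mr where "Mr = enn2real (Mtot P i)"
    have Mt: "Mtot P i = ennreal Mr" and Mr: "0 < Mr" using False unfolding Mr_def
      by (cases "Mtot P i"; auto)+
    have fin: "\<And>z. z \<in> set_pmf (P i) \<Longrightarrow> finite (supp z)" using V by (auto simp: valid_offspring_def)
    have intZ: "integrable (measure_pmf (P i)) (\<lambda>z. real (Ztot z))"
      by (rule integrableI_nn_integral_finite[where x=Mr]) (use Mt in \<open>auto simp: Mtot_def\<close>)
    have EZ: "measure_pmf.expectation (P i) (\<lambda>z. real (Ztot z)) = Mr"
    proof -
      have "ennreal (measure_pmf.expectation (P i) (\<lambda>z. real (Ztot z))) = ennreal Mr"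
        using nn_integral_eq_integral[OF intZ] Mt unfolding Mtot_def by simp
      then show ?thesis using Mr by (subst (asm) ennreal_inj) (auto intro: integral_nonneg_AE)
    qed
    define \<phi> where "\<phi> z = min 1 (real (Ztot z) * Qb)" for z
    have phi01: "0 \<le> \<phi> z" "\<phi> z \<le> 1" for z unfolding \<phi>_def using Qbnn by auto
    define nj where "nj j z = (\<Sum>k<z j. t j ^ k) * (1 - (\<Prod>l\<in>{l\<in>supp z. j < l}. t l ^ z l))" for j z
    have Nf: "Nfun P i j t = measure_pmf.expectation (P i) (nj j)" for j
      unfolding Nfun_def nj_def ..
    have Qb2: "\<And>l. 1 - t l \<le> Qb" using Qle unfolding Qt .
    have njb: "0 \<le> nj j z" "nj j z \<le> real (z j) * \<phi> z" if "finite (supp z)" for j z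
      using nfun_pt[OF t that Qbnn Qb2] unfolding nj_def \<phi>_def by auto
    have int_by_Z: "integrable (measure_pmf (P i)) f"
      if "\<And>z. z \<in> set_pmf (P i) \<Longrightarrow> \<bar>f z\<bar> \<le> real (Ztot z)" for f
      by (rule Bochner_Integration.integrable_bound[OF intZ]) (use that in \<open>auto simp: AE_measure_pmf_iff\<close>)
    have int_nj: "integrable (measure_pmf (P i)) (nj j)" for j
    proof (rule int_by_Z)
      fix z assume z: "z \<in> set_pmf (P i)"
      have "real (z j) * \<phi> z \<le> real (z j)" using phi01[of z] by (simp add: mult_left_le)
      then show "\<bar>nj j z\<bar> \<le> real (Ztot z)" using njb[OF fin[OF z], of j] zj_le_Ztot[OF fin[OF z], of j] by simp
    qed
    have int_zphi: "integrable (measure_pmf (P i)) (\<lambda>z. real (z j) * \<phi> z)" for j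
    proof (rule int_by_Z)
      fix z assume z: "z \<in> set_pmf (P i)"
      have "real (z j) * \<phi> z \<le> real (z j)" using phi01[of z] by (simp add: mult_left_le)
      then show "\<bar>real (z j) * \<phi> z\<bar> \<le> real (Ztot z)" using phi01[of z] zj_le_Ztot[OF fin[OF z], of j] by simp
    qed
    define h where "h z = real (Ztot z) * \<phi> z" for z
    have int_h: "integrable (measure_pmf (P i)) h"
    proof (rule int_by_Z)
      fix z
      have "real (Ztot z) * \<phi> z \<le> real (Ztot z)" using phi01[of z] by (simp add: mult_left_le)
      then show "\<bar>h z\<bar> \<le> real (Ztot z)" unfolding h_def using phi01[of z] by simp
    qed
    have int_T: "integrable (measure_pmf (P i)) T"
      by (rule int_by_Z) (auto simp: T_def)
    have Nnn: "0 \<le> Nfun P i j t" for j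
      unfolding Nf using njb fin by (intro integral_nonneg_AE) (auto simp: AE_measure_pmf_iff)
    have Nle: "Nfun P i j t \<le> measure_pmf.expectation (P i) (\<lambda>z. real (z j) * \<phi> z)" for j
      unfolding Nf using njb fin by (intro integral_mono_AE int_nj int_zphi) (auto simp: AE_measure_pmf_iff)
    have Qnn: "0 \<le> Qn P m s j" for j using t01[of j] unfolding Qt by simp
    have partial: "(\<Sum>j<N. Qn P m s j * Nfun P i j t) \<le> Qb * measure_pmf.expectation (P i) h" for N
    proof -
      have "(\<Sum>j<N. Qn P m s j * Nfun P i j t) \<le> (\<Sum>j<N. Qb * measure_pmf.expectation (P i) (\<lambda>z. real (z j) * \<phi> z))"
        using Qle Nle Nnn Qbnn by (intro sum_mono mult_mono) auto
      also have "\<dots> = Qb * measure_pmf.expectation (P i) (\<lambda>z. \<Sum>j<N. real (z j) * \<phi> z)"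
        by (subst Bochner_Integration.integral_sum) (auto simp: int_zphi sum_distrib_left)
      also have "\<dots> \<le> Qb * measure_pmf.expectation (P i) h"
      proof (intro mult_left_mono Qbnn integral_mono_AE)
        show "integrable (measure_pmf (P i)) (\<lambda>z. \<Sum>j<N. real (z j) * \<phi> z)" using int_zphi by auto
        show "integrable (measure_pmf (P i)) h" by (rule int_h)
        show "AE z in measure_pmf (P i). (\<Sum>j<N. real (z j) * \<phi> z) \<le> h z"
          unfolding AE_measure_pmf_iff h_def
        proof
          fix z assume z: "z \<in> set_pmf (P i)"
          have "(\<Sum>j<N. real (z j) * \<phi> z) = (\<Sum>j<N. real (z j)) * \<phi> z" by (simp add: sum_distrib_right)
          also have "\<dots> \<le> real (Ztot z) * \<phi> z"
            using sum_lessThan_le_Ztot[OF fin[OF z]] phi01[of z] by (intro mult_right_mono) auto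
          finally show "(\<Sum>j<N. real (z j) * \<phi> z) \<le> real (Ztot z) * \<phi> z" .
        qed
      qed
      finally show ?thesis .
    qed
    have tnn: "\<And>j. 0 \<le> Qn P m s j * Nfun P i j t" using Qnn Nnn by simp
    have summ: "summable (\<lambda>j. Qn P m s j * Nfun P i j t)"
      by (rule summableI_nonneg_bounded[OF tnn partial])
    define S where "S = (\<Sum>j. Qn P m s j * Nfun P i j t)"
    have Snn: "0 \<le> S" unfolding S_def by (rule suminf_nonneg[OF summ tnn])
    have Sle: "S \<le> Qb * measure_pmf.expectation (P i) h" unfolding S_def by (rule suminf_le_const[OF summ partial])
    have eps: "eps1 P m s i = S / Mr" unfolding eps1_def S_def Mr_def t_def ..
    have Ehnn: "0 \<le> measure_pmf.expectation (P i) h"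
      unfolding h_def using phi01 by (intro integral_nonneg_AE) auto
    have r1: "\<bar>eps1 P m s i\<bar> / Qsup P m s \<le> measure_pmf.expectation (P i) h / Mr"
    proof (cases "Qb = 0")
      case True then show ?thesis unfolding Qb_def[symmetric] using Ehnn Mr by simp
    next
      case False
      then have Qbp: "0 < Qb" using Qbnn by simp
      have "\<bar>eps1 P m s i\<bar> / Qsup P m s = (S / Qb) / Mr" unfolding eps Qb_def[symmetric] using Snn Mr by simp
      also have "\<dots> \<le> measure_pmf.expectation (P i) h / Mr"
        using Sle Qbp Mr by (intro divide_right_mono) (auto simp: divide_le_eq mult.commute)
      finally show ?thesis .
    qed
    have hle: "measure_pmf.expectation (P i) h \<le> measure_pmf.expectation (P i) (\<lambda>z. real K * G * real (Ztot z) + T z)"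
    proof (intro integral_mono int_h)
      show "integrable (measure_pmf (P i)) (\<lambda>z. real K * G * real (Ztot z) + T z)" using intZ int_T by auto
      fix z
      show "h z \<le> real K * G * real (Ztot z) + T z"
      proof (cases "K < Ztot z")
        case True
        have "h z \<le> real (Ztot z)" unfolding h_def using phi01[of z] by (simp add: mult_left_le)
        moreover have "0 \<le> real K * G * real (Ztot z)" using Gnn by simp
        ultimately show ?thesis using True unfolding T_def by simp
      next
        case False
        have "h z \<le> real (Ztot z) * (real (Ztot z) * Qb)" unfolding h_def \<phi>_def by (intro mult_left_mono) auto
        also have "\<dots> \<le> real (Ztot z) * (real K * G)"
          using False Qbnn QbG Gnn by (intro mult_left_mono mult_mono) auto
        finally show ?thesis using False unfolding T_def by (simp add: algebra_simps)
      qed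
    qed
    also have "\<dots> = real K * G * Mr + measure_pmf.expectation (P i) T"
      using intZ int_T EZ by simp
    finally have "measure_pmf.expectation (P i) h / Mr \<le> (real K * G * Mr + measure_pmf.expectation (P i) T) / Mr"
      using Mr by (intro divide_right_mono) auto
    also have "\<dots> = real K * G + measure_pmf.expectation (P i) T / Mr"
      using Mr by (simp add: add_divide_distrib)
    finally have r2: "\<bar>eps1 P m s i\<bar> / Qsup P m s \<le> real K * G + measure_pmf.expectation (P i) T / Mr"
      using r1 by simp
    have ETnn: "0 \<le> measure_pmf.expectation (P i) T" unfolding T_def by (intro integral_nonneg_AE) auto
    have "ennreal (\<bar>eps1 P m s i\<bar> / Qsup P m s) \<le> ennreal (real K * G + measure_pmf.expectation (P i) T / Mr)"
      using r2 by (rule ennreal_leI)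
    also have "\<dots> = ennreal (real K * G) + ennreal (measure_pmf.expectation (P i) T / Mr)"
      using Gnn ETnn Mr by (intro ennreal_plus) auto
    also have "ennreal (measure_pmf.expectation (P i) T / Mr) = ennreal (measure_pmf.expectation (P i) T) / ennreal Mr"
      using ETnn Mr by (simp add: divide_ennreal)
    also have "ennreal (measure_pmf.expectation (P i) T) = (\<integral>\<^sup>+ z. ennreal (T z) \<partial>measure_pmf (P i))"
      using int_T by (intro nn_integral_eq_integral[symmetric]) (auto simp: T_def)
    finally show ?thesis unfolding Mt T_def .
  qed
qed

theorem lemma6:
  fixes P :: "nat \<Rightarrow> (nat \<Rightarrow> nat) pmf"
  assumes "valid_offspring P"
    and "in_M10 P"
    and "F_not_linear P"
  shows "(\<lambda>n. \<Squnion>(s, i)\<in>Sset \<times> UNIV. ennreal (\<bar>eps1 P n s i\<bar> / Qsup P n s)) \<longlonglongrightarrow> 0"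
proof -
  note V = assms(1)
  obtain u v C where irr: "\<forall>i j. \<exists>n\<ge>1. 0 < Mpow P n i j" and vpos: "\<forall>j. 0 < v j"
    and upos: "\<forall>i. 0 < u i"
    and vM: "\<forall>j. (\<Sum>i. ennreal (v i) * Mmat P i j) = ennreal (v j)"
    and v1: "(\<Sum>j. ennreal (v j)) = 1" and ubdd: "bdd_above (range u)"
    and tau: "(\<lambda>K. \<Squnion>i. (\<integral>\<^sup>+ z. ennreal (if K < Ztot z then real (Ztot z) else 0) \<partial>measure_pmf (P i))
                    / Mtot P i) \<longlonglongrightarrow> 0"
    and C: "0 < C" and MC: "\<forall>i j. Mmat P i j < ennreal (C * u i * v j)"
    by (rule M10_unpack[OF assms(2)])
  obtain U where U: "\<And>i. u i \<le> U" using ubdd by (auto simp: bdd_above_def)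
  have uU: "\<And>i. 0 < u i \<and> u i \<le> U" using upos U by auto
  have vnn: "\<And>j. 0 \<le> v j" using vpos by (simp add: less_imp_le)
  have sv: "summable v" using v1 vnn by (intro summable_suminf_not_top) auto
  have ext: "\<And>j. rr P j = 1" by (rule extinct[OF V irr vpos vM v1 assms(3)])
  define G where "G n = C * U * (\<Sum>j. v j * (1 - genfn P n (\<lambda>_. 0) j))" for n
  have Glim: "G \<longlonglongrightarrow> 0"
    unfolding G_def using tendsto_mult_left[OF w_lim[OF sv vnn ext], of "C * U"] by simp
  have QG: "Qn P (Suc n) s j \<le> G n" if "s \<in> Sset" for n s j
    unfolding G_def by (rule unif_bound[OF V vnn sv MC C uU]) (use that in \<open>simp add: Sset_def unit01_def\<close>)
  define f where "f n = (\<Squnion>(s, i)\<in>Sset \<times> UNIV. ennreal (\<bar>eps1 P n s i\<bar> / Qsup P n s))" for n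
  define \<tau> where "\<tau> K = (\<Squnion>i. (\<integral>\<^sup>+ z. ennreal (if K < Ztot z then real (Ztot z) else 0) \<partial>measure_pmf (P i))
                    / Mtot P i)" for K
  have fb: "f (Suc n) \<le> ennreal (real K * G n) + \<tau> K" for n K
    unfolding f_def
  proof (rule SUP_least, clarify)
    fix s i assume s: "s \<in> Sset"
    have "ennreal (\<bar>eps1 P (Suc n) s i\<bar> / Qsup P (Suc n) s)
      \<le> ennreal (real K * G n) + (\<integral>\<^sup>+ z. ennreal (if K < Ztot z then real (Ztot z) else 0) \<partial>measure_pmf (P i)) / Mtot P i"
      by (rule ratio_bound[OF V _ QG[OF s]]) (use s in \<open>simp add: Sset_def unit01_def\<close>)
    also have "\<dots> \<le> ennreal (real K * G n) + \<tau> K"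
      unfolding \<tau>_def by (intro add_left_mono SUP_upper) auto
    finally show "ennreal (\<bar>eps1 P (Suc n) s i\<bar> / Qsup P (Suc n) s) \<le> ennreal (real K * G n) + \<tau> K" .
  qed
  have "(\<lambda>n. f (Suc n)) \<longlonglongrightarrow> 0"
  proof (rule order_tendstoI)
    fix a :: ennreal assume "a < 0" then show "eventually (\<lambda>n. a < f (Suc n)) sequentially" by simp
  next
    fix y :: ennreal assume y: "0 < y"
    obtain r where r: "0 < r" "r < y" using dense[OF y] by blast
    have "r < top" using r(2) top_greatest by (rule less_le_trans)
    then obtain e where e: "r = ennreal e" "0 \<le> e" unfolding less_top_ennreal by blast
    have ep: "0 < e" using r e by simp
    have "eventually (\<lambda>K. \<tau> K < ennreal (e/2)) sequentially"
      using order_tendstoD(2)[OF tau[folded \<tau>_def]] ep by simp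
    then obtain K where K: "\<tau> K < ennreal (e/2)" by (auto simp: eventually_sequentially)
    have "(\<lambda>n. ennreal (real K * G n)) \<longlonglongrightarrow> ennreal (real K * 0)"
      by (intro tendsto_ennrealI tendsto_mult_left Glim)
    then have "eventually (\<lambda>n. ennreal (real K * G n) < ennreal (e/2)) sequentially"
      using ep by (intro order_tendstoD(2)) auto
    then show "eventually (\<lambda>n. f (Suc n) < y) sequentially"
    proof eventually_elim
      case (elim n)
      have "f (Suc n) \<le> ennreal (real K * G n) + \<tau> K" by (rule fb)
      also have "\<dots> < ennreal (e/2 + e/2)" by (rule add_mono_ennreal[OF elim K])
      also have "\<dots> = r" using e by simp
      finally show ?case using r by simp
    qed
  qed
  then show ?thesis unfolding f_def by (rule LIMSEQ_imp_Suc)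
qed

end
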